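(* Let $\varepsilon>0$ and $\theta,\bar\theta,\varphi,\bar\varphi,\alpha,\bar\alpha\in\mathbb{R}$ with $|\theta-\bar\theta|,|\varphi-\bar\varphi|,|\alpha-\bar\alpha|\le\varepsilon$. Then \[ \|R(\alpha)M(\theta,\varphi)-R(\bar\alpha)M(\bar\theta,\bar\varphi)\|<\sqrt5\varepsilon. \]
   Context: $R(\alpha)=\begin{pmatrix}\cos\alpha&-\sin\alpha\\ \sin\alpha&\cos\alpha\end{pmatrix}$, $M(\theta,\varphi)=\begin{pmatrix}-\sin\theta&\cos\theta&0\\ -\cos\theta\cos\varphi&-\sin\theta\cos\varphi&\sin\varphi\end{pmatrix}$; $\|\cdot\|$ is the operator norm induced by Euclidean norms. *)

theory Defs
  imports "HOL-Analysis.Analysis"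
begin

definition rotR :: "real \<Rightarrow> real^2^2" where
  "rotR \<alpha> = vector [vector [cos \<alpha>, - sin \<alpha>], vector [sin \<alpha>, cos \<alpha>]]"

definition matM :: "real \<Rightarrow> real \<Rightarrow> real^3^2" where
  "matM \<theta> \<phi> = vector [vector [- sin \<theta>, cos \<theta>, 0],
                        vector [- cos \<theta> * cos \<phi>, - sin \<theta> * cos \<phi>, sin \<phi>]]"

definition opnorm :: "real^'n^'m \<Rightarrow> real" where
  "opnorm A = onorm (\<lambda>x. A *v x)"

end

theory Submission
  imports Defs
begin

lemma RM_entries:
  "(rotR a ** matM t p) $ 1 $ 1 = cos a * (- sin t) - sin a * (- cos t * cos p)"
  "(rotR a ** matM t p) $ 1 $ 2 = cos a * cos t - sin a * (- sin t * cos p)"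
  "(rotR a ** matM t p) $ 1 $ 3 = - sin a * sin p"
  "(rotR a ** matM t p) $ 2 $ 1 = sin a * (- sin t) + cos a * (- cos t * cos p)"
  "(rotR a ** matM t p) $ 2 $ 2 = sin a * cos t + cos a * (- sin t * cos p)"
  "(rotR a ** matM t p) $ 2 $ 3 = cos a * sin p"
  by (simp_all add: matrix_matrix_mult_def sum_2 rotR_def matM_def)

lemma core_poly:
  fixes c1 u1 c2 u2 cf uf cg ug z1 z2 :: real
  assumes h1: "c1^2 + u1^2 = 1" and h2: "c2^2+u2^2 = 1" and hf: "cf^2+uf^2=1" and hg: "cg^2+ug^2=1"
  shows "z1*((c2^2-u2^2)*((c1^2 - u1^2)*z1 - (2*u1*c1)*z2) + (2*u2*c2)*(cg^2-ug^2)*((2*u1*c1)*z1 + (c1^2 - u1^2)*z2))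
       + z2*(- (2*u2*c2)*(cf^2-uf^2)*((c1^2 - u1^2)*z1 - (2*u1*c1)*z2)
             + ((c2^2-u2^2)*(cf^2-uf^2)*(cg^2-ug^2) + (2*uf*cf)*(2*ug*cg))*((2*u1*c1)*z1 + (c1^2 - u1^2)*z2))
       - (2*(c1*c2*(cf*cg + uf*ug) + u1*u2*(cf*cg - uf*ug))^2-1)*(z1^2+z2^2)
     = 2*((c1*c2*(uf*cg - cf*ug) + u1*u2*(uf*cg + cf*ug))*z1
          + (c1*u2*(uf*cg + cf*ug) - u1*c2*(uf*cg - cf*ug))*z2)^2"
  using assms by algebra

lemma core_trig:
  fixes b d p q za zb :: real
  shows "za*(cos d * (cos b*za - sin b*zb) + sin d * cos q * (sin b * za + cos b * zb))
       + zb*(- sin d * cos p * (cos b*za - sin b*zb) + (cos d*cos p*cos q + sin p * sin q)*(sin b * za + cos b * zb))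
       - (2*(cos(b/2)*cos(d/2)*cos((p-q)/2) + sin(b/2)* sin(d/2)*cos((p+q)/2))^2-1)*(za^2+zb^2)
     = 2*((cos(b/2)*cos(d/2)* sin((p-q)/2) + sin(b/2)* sin(d/2)* sin((p+q)/2))*za
          + (cos(b/2)* sin(d/2)* sin((p+q)/2) - sin(b/2)*cos(d/2)* sin((p-q)/2))*zb)^2"
proof -
  have cb: "cos b = cos(b/2)^2 - sin(b/2)^2" using cos_double[of "b/2"] by simp
  have sb: "sin b = 2* sin(b/2)*cos(b/2)" using sin_double[of "b/2"] by simp
  have cd: "cos d = cos(d/2)^2 - sin(d/2)^2" using cos_double[of "d/2"] by simp
  have sd: "sin d = 2* sin(d/2)*cos(d/2)" using sin_double[of "d/2"] by simp
  have cp: "cos p = cos(p/2)^2 - sin(p/2)^2" using cos_double[of "p/2"] by simp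
  have sp: "sin p = 2* sin(p/2)*cos(p/2)" using sin_double[of "p/2"] by simp
  have cq: "cos q = cos(q/2)^2 - sin(q/2)^2" using cos_double[of "q/2"] by simp
  have sq: "sin q = 2* sin(q/2)*cos(q/2)" using sin_double[of "q/2"] by simp
  have E: "cos((p-q)/2) = cos(p/2)*cos(q/2) + sin(p/2)* sin(q/2)"
    using cos_diff[of "p/2" "q/2"] by (simp add: diff_divide_distrib)
  have F: "cos((p+q)/2) = cos(p/2)*cos(q/2) - sin(p/2)* sin(q/2)"
    using cos_add[of "p/2" "q/2"] by (simp add: add_divide_distrib)
  have sE: "sin((p-q)/2) = sin(p/2)*cos(q/2) - cos(p/2)* sin(q/2)"
    using sin_diff[of "p/2" "q/2"] by (simp add: diff_divide_distrib)
  have sF: "sin((p+q)/2) = sin(p/2)*cos(q/2) + cos(p/2)* sin(q/2)"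
    using sin_add[of "p/2" "q/2"] by (simp add: add_divide_distrib)
  show ?thesis
    unfolding cb sb cd sd cp sp cq sq E F sE sF
    by (rule core_poly) simp_all
qed


lemma ybound:
  fixes a a' t t' p p' y1 y2 :: real
  defines "A11 \<equiv> cos a * - sin t - sin a * (- cos t * cos p)"
      and "A12 \<equiv> cos a * cos t - sin a * (- sin t * cos p)"
      and "A13 \<equiv> - sin a * sin p"
      and "A21 \<equiv> sin a * - sin t + cos a * (- cos t * cos p)"
      and "A22 \<equiv> sin a * cos t + cos a * (- sin t * cos p)"
      and "A23 \<equiv> cos a * sin p"
      and "B11 \<equiv> cos a' * - sin t' - sin a' * (- cos t' * cos p')"
      and "B12 \<equiv> cos a' * cos t' - sin a' * (- sin t' * cos p')"
      and "B13 \<equiv> - sin a' * sin p'"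
      and "B21 \<equiv> sin a' * - sin t' + cos a' * (- cos t' * cos p')"
      and "B22 \<equiv> sin a' * cos t' + cos a' * (- sin t' * cos p')"
      and "B23 \<equiv> cos a' * sin p'"
      and "V \<equiv> cos((a-a')/2)*cos((t-t')/2)*cos((p-p')/2) + sin((a-a')/2)* sin((t-t')/2)*cos((p+p')/2)"
  shows "(y1*(A11-B11) + y2*(A21-B21))^2 + (y1*(A12-B12) + y2*(A22-B22))^2
          + (y1*(A13-B13) + y2*(A23-B23))^2 \<le> 4*(1-V^2)*(y1^2+y2^2)"
proof -
  define z1 where "z1 = cos a * y1 + sin a * y2"
  define z2 where "z2 = - sin a * y1 + cos a * y2"
  define w1 where "w1 = cos a' * y1 + sin a' * y2"
  define w2 where "w2 = - sin a' * y1 + cos a' * y2"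
  define m11 where "m11 = - sin t"
  define m12 where "m12 = cos t"
  define m13 where "m13 = (0::real)"
  define m21 where "m21 = - cos t * cos p"
  define m22 where "m22 = - sin t * cos p"
  define m23 where "m23 = sin p"
  define n11 where "n11 = - sin t'"
  define n12 where "n12 = cos t'"
  define n13 where "n13 = (0::real)"
  define n21 where "n21 = - cos t' * cos p'"
  define n22 where "n22 = - sin t' * cos p'"
  define n23 where "n23 = sin p'"
  define u1 where "u1 = y1*A11 + y2*A21"
  define u2 where "u2 = y1*A12 + y2*A22"
  define u3 where "u3 = y1*A13 + y2*A23"
  define v1 where "v1 = y1*B11 + y2*B21"
  define v2 where "v2 = y1*B12 + y2*B22"
  define v3 where "v3 = y1*B13 + y2*B23"
  have LHS: "(y1*(A11-B11) + y2*(A21-B21))^2 + (y1*(A12-B12) + y2*(A22-B22))^2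
          + (y1*(A13-B13) + y2*(A23-B23))^2 = (u1^2+u2^2+u3^2) + (v1^2+v2^2+v3^2) - 2*(u1* v1+u2* v2+u3* v3)"
    unfolding u1_def u2_def u3_def v1_def v2_def v3_def by (simp add: algebra_simps power2_eq_square)
  have u: "u1 = z1*m11 + z2*m21" "u2 = z1*m12 + z2*m22" "u3 = z1*m13 + z2*m23"
    unfolding u1_def u2_def u3_def z1_def z2_def m11_def m12_def m13_def m21_def m22_def m23_def
      A11_def A12_def A13_def A21_def A22_def A23_def by (simp_all add: algebra_simps)
  have v: "v1 = w1*n11 + w2*n21" "v2 = w1*n12 + w2*n22" "v3 = w1*n13 + w2*n23"
    unfolding v1_def v2_def v3_def w1_def w2_def n11_def n12_def n13_def n21_def n22_def n23_def
      B11_def B12_def B13_def B21_def B22_def B23_def by (simp_all add: algebra_simps)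
  have sa: "sin a ^2 + cos a^2 = 1" and sa': "sin a' ^2 + cos a'^2 = 1" by simp_all
  have st: "sin t ^2 + cos t^2 = 1" and st': "sin t' ^2 + cos t'^2 = 1" by simp_all
  have sp: "sin p ^2 + cos p^2 = 1" and sp': "sin p' ^2 + cos p'^2 = 1" by simp_all
  have nz: "z1^2+z2^2 = y1^2+y2^2" unfolding z1_def z2_def using sa by algebra
  have nw: "w1^2+w2^2 = y1^2+y2^2" unfolding w1_def w2_def using sa' by algebra
  have uu: "u1^2+u2^2+u3^2 = z1^2+z2^2"
    unfolding u m11_def m12_def m13_def m21_def m22_def m23_def using st sp by algebra
  have vv: "v1^2+v2^2+v3^2 = w1^2+w2^2"
    unfolding v n11_def n12_def n13_def n21_def n22_def n23_def using st' sp' by algebra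
  have wz: "w1 = cos (a-a')*z1 - sin (a-a')*z2" "w2 = sin (a-a')*z1 + cos (a-a')*z2"
    unfolding w1_def w2_def z1_def z2_def cos_diff sin_diff using sa by algebra+
  have uv: "u1* v1+u2* v2+u3* v3 = z1*(cos (t-t') * w1 + sin (t-t') * cos p' * w2)
       + z2*(- sin (t-t') * cos p * w1 + (cos (t-t')*cos p*cos p' + sin p * sin p')*w2)"
    unfolding u v n11_def n12_def n13_def n21_def n22_def n23_def
      m11_def m12_def m13_def m21_def m22_def m23_def cos_diff sin_diff
    by (simp add: algebra_simps)
  note ct = core_trig[where b="a-a'" and d="t-t'" and p=p and q=p' and za=z1 and zb=z2]
  define Q where "Q = z1*(cos (t-t') * w1 + sin (t-t') * cos p' * w2)
       + z2*(- sin (t-t') * cos p * w1 + (cos (t-t')*cos p*cos p' + sin p * sin p')*w2)"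
  define L where "L = (cos((a-a')/2)*cos((t-t')/2)* sin((p-p')/2) + sin((a-a')/2)* sin((t-t')/2)* sin((p+p')/2))*z1
          + (cos((a-a')/2)* sin((t-t')/2)* sin((p+p')/2) - sin((a-a')/2)*cos((t-t')/2)* sin((p-p')/2))*z2"
  have QV: "Q - (2*V^2-1)*(y1^2+y2^2) = 2*L^2"
    using ct unfolding Q_def L_def V_def nz[symmetric] wz by simp
  have "0 \<le> L^2" by simp
  then have QV': "(2*V^2-1)*(y1^2+y2^2) \<le> Q" using QV by linarith
  have "(u1^2+u2^2+u3^2) + (v1^2+v2^2+v3^2) - 2*(u1* v1+u2* v2+u3* v3) = 2*(y1^2+y2^2) - 2*Q"
    unfolding uu vv uv nw nz Q_def by simp
  also have "\<dots> \<le> 2*(y1^2+y2^2) - 2*((2*V^2-1)*(y1^2+y2^2))" using QV' by linarith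
  also have "\<dots> = 4*(1-V^2)*(y1^2+y2^2)" by (simp add: algebra_simps)
  finally show ?thesis unfolding LHS .
qed

lemma xbound:
  fixes d11 d12 d13 d21 d22 d23 x1 x2 x3 lam :: real
  assumes H: "\<And>y1 y2. (y1*d11+y2*d21)^2 + (y1*d12+y2*d22)^2 + (y1*d13+y2*d23)^2 \<le> lam*(y1^2+y2^2)"
  shows "(d11*x1+d12*x2+d13*x3)^2 + (d21*x1+d22*x2+d23*x3)^2 \<le> lam*(x1^2+x2^2+x3^2)"
proof -
  define y1 where "y1 = d11*x1+d12*x2+d13*x3"
  define y2 where "y2 = d21*x1+d22*x2+d23*x3"
  define u1 where "u1 = y1*d11+y2*d21"
  define u2 where "u2 = y1*d12+y2*d22"
  define u3 where "u3 = y1*d13+y2*d23"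
  define Y where "Y = y1^2+y2^2"
  define X where "X = x1^2+x2^2+x3^2"
  have lam0: "0 \<le> lam"
  proof -
    have "0 \<le> d11^2+d12^2+d13^2" by simp
    moreover have "d11^2+d12^2+d13^2 \<le> lam" using H[of 1 0] by simp
    ultimately show ?thesis by linarith
  qed
  have X0: "0 \<le> X" unfolding X_def by simp
  have Y0: "0 \<le> Y" unfolding Y_def by simp
  have U: "u1^2+u2^2+u3^2 \<le> lam * Y" unfolding u1_def u2_def u3_def Y_def by (rule H)
  have YU: "Y = u1*x1+u2*x2+u3*x3"
    unfolding Y_def u1_def u2_def u3_def y1_def y2_def by (simp add: algebra_simps power2_eq_square)
  have CS: "Y^2 \<le> (u1^2+u2^2+u3^2) * X"
  proof -
    have "(u1^2+u2^2+u3^2) * X - Y^2 = (u1*x2-u2*x1)^2+(u1*x3-u3*x1)^2+(u2*x3-u3*x2)^2"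
      unfolding YU X_def by (simp add: algebra_simps power2_eq_square)
    moreover have "0 \<le> (u1*x2-u2*x1)^2+(u1*x3-u3*x1)^2+(u2*x3-u3*x2)^2" by simp
    ultimately show ?thesis by linarith
  qed
  also have "\<dots> \<le> lam * Y * X" using U X0 by (simp add: mult_right_mono)
  finally have "Y * Y \<le> (lam * X) * Y" by (simp add: power2_eq_square algebra_simps)
  then have "Y \<le> lam * X"
    using Y0 lam0 X0 by (cases "Y = 0") (auto simp: mult_le_cancel_right)
  then show ?thesis unfolding Y_def X_def y1_def y2_def .
qed


lemma cos_lb: "1 - x^2/2 \<le> cos (x::real)"
proof -
  have "cos x = 1 - 2 * sin (x/2)^2" using cos_double_sin[of "x/2"] by simp
  moreover have "sin (x/2)^2 \<le> (x/2)^2"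
    using abs_sin_x_le_abs_x[of "x/2"] by (metis abs_ge_zero power2_abs power_mono)
  ultimately show ?thesis by (simp add: power_divide)
qed

lemma cos_half_lb:
  fixes x e :: real assumes "\<bar>x\<bar> \<le> 2*e"
  shows "1 - e^2/2 \<le> cos (x/2)"
proof -
  have "\<bar>x/2\<bar> \<le> e" using assms by simp
  then have "(x/2)^2 \<le> e^2" by (metis abs_ge_zero power2_abs power_mono)
  then show ?thesis using cos_lb[of "x/2"] by linarith
qed

lemma sin_half_ub:
  fixes x e :: real assumes "\<bar>x\<bar> \<le> 2*e"
  shows "\<bar>sin (x/2)\<bar> \<le> e"
  using abs_sin_x_le_abs_x[of "x/2"] assms by simp

lemma Vbound:
  fixes \<epsilon> a a' t t' p p' :: real
  assumes "\<epsilon> > 0" "\<bar>t - t'\<bar> \<le> \<epsilon>" "\<bar>p - p'\<bar> \<le> \<epsilon>" "\<bar>a - a'\<bar> \<le> \<epsilon>"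
  defines "V \<equiv> cos((a-a')/2)*cos((t-t')/2)*cos((p-p')/2) + sin((a-a')/2)* sin((t-t')/2)*cos((p+p')/2)"
  shows "4*(1-V^2) < 5*\<epsilon>^2"
proof (cases "\<epsilon> < 1")
  case False
  have "0 \<le> V^2" by simp
  moreover have "1 \<le> \<epsilon>^2" using False by (simp add: one_le_power)
  moreover have "4*(1-V^2) = 4 - 4*V^2" by simp
  ultimately show ?thesis by linarith
next
  case True
  define e where "e = \<epsilon>/2"
  define k where "k = 1 - e^2/2"
  have e0: "0 < e" "e < 1/2" using assms(1) True by (simp_all add: e_def)
  have ee: "e*e < 1/4" using mult_strict_mono[of e "1/2" e "1/2"] e0 by simp
  then have k0: "0 \<le> k" unfolding k_def by (simp add: power2_eq_square)
  have c1: "k \<le> cos((a-a')/2)" unfolding k_def by (rule cos_half_lb) (use assms e_def in simp)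
  have c2: "k \<le> cos((t-t')/2)" unfolding k_def by (rule cos_half_lb) (use assms e_def in simp)
  have c3: "k \<le> cos((p-p')/2)" unfolding k_def by (rule cos_half_lb) (use assms e_def in simp)
  have s1: "\<bar>sin((a-a')/2)\<bar> \<le> e" by (rule sin_half_ub) (use assms e_def in simp)
  have s2: "\<bar>sin((t-t')/2)\<bar> \<le> e" by (rule sin_half_ub) (use assms e_def in simp)
  have cF: "\<bar>cos((p+p')/2)\<bar> \<le> 1" by simp
  have P1: "k^3 \<le> cos((a-a')/2)*cos((t-t')/2)*cos((p-p')/2)"
  proof -
    have "k*k \<le> cos((a-a')/2)*cos((t-t')/2)" using c1 c2 k0 by (simp add: mult_mono)
    moreover have "0 \<le> k*k" using k0 by simp
    ultimately have "k*k*k \<le> cos((a-a')/2)*cos((t-t')/2)*cos((p-p')/2)"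
      using c3 k0 by (meson mult_mono order_trans mult_nonneg_nonneg)
    then show ?thesis by (simp add: power3_eq_cube)
  qed
  have P2: "\<bar>sin((a-a')/2)* sin((t-t')/2)*cos((p+p')/2)\<bar> \<le> e^2"
  proof -
    have "\<bar>sin((a-a')/2)* sin((t-t')/2)\<bar> \<le> e*e" unfolding abs_mult
      using s1 s2 by (simp add: mult_mono)
    then have "\<bar>sin((a-a')/2)* sin((t-t')/2)\<bar> * \<bar>cos((p+p')/2)\<bar> \<le> e*e*1"
      by (rule mult_mono) (use cF in auto)
    then show ?thesis by (simp add: abs_mult power2_eq_square)
  qed
  define g where "g = k^3 - e^2"
  have Vg: "g \<le> V" unfolding V_def g_def using P1 P2 by linarith
  define u where "u = e^2"
  have u0: "0 < u" "u < 1/4" unfolding u_def using e0 ee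
    by (simp_all add: power2_eq_square)
  have gu: "g = 1 - 5/2*u + 3/4*u^2 - u^3/8" unfolding g_def k_def u_def
    by (simp add: power3_eq_cube power2_eq_square field_simps)
  define r where "r = 3/4*u^2 - u^3/8"
  define a0 where "a0 = 1 - 5/2*u"
  have u3: "u^3 \<le> u^2" using u0 by (simp add: power_decreasing)
  have "0 \<le> u^2" by simp
  then have r0: "0 \<le> r" unfolding r_def using u3 by linarith
  have a00: "0 < a0" unfolding a0_def using u0 by linarith
  have ga: "g = a0 + r" unfolding gu a0_def r_def by simp
  have g0: "0 < g" using ga a00 r0 by linarith
  have "a0^2 \<le> g^2" unfolding ga using a00 r0 by (simp add: power_mono)
  moreover have "a0^2 = 1 - 5*u + 25/4*u^2" unfolding a0_def by (simp add: power2_eq_square algebra_simps)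
  moreover have "0 < u^2" using u0 by simp
  ultimately have gg: "1 - 5*u < g^2" by linarith
  have "g^2 \<le> V^2" using Vg g0 by (simp add: power_mono)
  then have "1 - 5*u < V^2" using gg by linarith
  moreover have "\<epsilon>^2 = 4*u" unfolding u_def e_def by (simp add: power2_eq_square)
  moreover have "4*(1-V^2) = 4 - 4*V^2" by simp
  ultimately show ?thesis by linarith
qed

theorem lemma3p8:
  fixes \<epsilon> \<theta> \<theta>' \<phi> \<phi>' \<alpha> \<alpha>' :: real
  assumes "\<epsilon> > 0"
    and "\<bar>\<theta> - \<theta>'\<bar> \<le> \<epsilon>" and "\<bar>\<phi> - \<phi>'\<bar> \<le> \<epsilon>" and "\<bar>\<alpha> - \<alpha>'\<bar> \<le> \<epsilon>"
  shows "opnorm (rotR \<alpha> ** matM \<theta> \<phi> - rotR \<alpha>' ** matM \<theta>' \<phi>') < sqrt 5 * \<epsilon>"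
proof -
  define D where "D = rotR \<alpha> ** matM \<theta> \<phi> - rotR \<alpha>' ** matM \<theta>' \<phi>'"
  define V where "V = cos((\<alpha>-\<alpha>')/2)*cos((\<theta>-\<theta>')/2)*cos((\<phi>-\<phi>')/2)
     + sin((\<alpha>-\<alpha>')/2)* sin((\<theta>-\<theta>')/2)*cos((\<phi>+\<phi>')/2)"
  define lam where "lam = 4*(1-V^2)"
  have lamlt: "lam < 5*\<epsilon>^2" unfolding lam_def V_def using Vbound[OF assms] .
  have Dij: "D$1$1 = (cos \<alpha> * - sin \<theta> - sin \<alpha> * (- cos \<theta> * cos \<phi>)) - (cos \<alpha>' * - sin \<theta>' - sin \<alpha>' * (- cos \<theta>' * cos \<phi>'))"
    "D$1$2 = (cos \<alpha> * cos \<theta> - sin \<alpha> * (- sin \<theta> * cos \<phi>)) - (cos \<alpha>' * cos \<theta>' - sin \<alpha>' * (- sin \<theta>' * cos \<phi>'))"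
    "D$1$3 = (- sin \<alpha> * sin \<phi>) - (- sin \<alpha>' * sin \<phi>')"
    "D$2$1 = (sin \<alpha> * - sin \<theta> + cos \<alpha> * (- cos \<theta> * cos \<phi>)) - (sin \<alpha>' * - sin \<theta>' + cos \<alpha>' * (- cos \<theta>' * cos \<phi>'))"
    "D$2$2 = (sin \<alpha> * cos \<theta> + cos \<alpha> * (- sin \<theta> * cos \<phi>)) - (sin \<alpha>' * cos \<theta>' + cos \<alpha>' * (- sin \<theta>' * cos \<phi>'))"
    "D$2$3 = (cos \<alpha> * sin \<phi>) - (cos \<alpha>' * sin \<phi>')"
    unfolding D_def by (simp_all only: vector_minus_component RM_entries)
  have H: "(y1*D$1$1+y2*D$2$1)^2 + (y1*D$1$2+y2*D$2$2)^2 + (y1*D$1$3+y2*D$2$3)^2 \<le> lam*(y1^2+y2^2)"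
    for y1 y2
    unfolding lam_def V_def Dij by (rule ybound)
  have lam0: "0 \<le> lam"
  proof -
    have "0 \<le> (D$1$1)^2+(D$1$2)^2+(D$1$3)^2" by simp
    moreover have "(D$1$1)^2+(D$1$2)^2+(D$1$3)^2 \<le> lam" using H[of 1 0] by simp
    ultimately show ?thesis by linarith
  qed
  have nb: "norm (D *v x) \<le> sqrt lam * norm x" for x :: "real^3"
  proof -
    have "(D *v x)$1 = D$1$1*x$1 + D$1$2*x$2 + D$1$3*x$3"
         "(D *v x)$2 = D$2$1*x$1 + D$2$2*x$2 + D$2$3*x$3"
      by (simp_all add: matrix_vector_mult_def sum_3)
    then have "norm (D *v x) = sqrt ((D$1$1*x$1 + D$1$2*x$2 + D$1$3*x$3)^2 + (D$2$1*x$1 + D$2$2*x$2 + D$2$3*x$3)^2)"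
      by (simp add: norm_eq_sqrt_inner inner_vec_def sum_2 power2_eq_square)
    also have "\<dots> \<le> sqrt (lam * (x$1^2+x$2^2+x$3^2))"
      by (rule real_sqrt_le_mono, rule xbound, rule H)
    also have "\<dots> = sqrt lam * norm x"
      by (simp add: real_sqrt_mult norm_eq_sqrt_inner inner_vec_def sum_3 power2_eq_square)
    finally show ?thesis .
  qed
  have "opnorm D \<le> sqrt lam" unfolding opnorm_def by (rule onorm_le) (rule nb)
  also have "sqrt lam < sqrt (5*\<epsilon>^2)" using lamlt by simp
  also have "sqrt (5*\<epsilon>^2) = sqrt 5 * \<epsilon>" using assms(1) by (simp add: real_sqrt_mult)
  finally show ?thesis unfolding D_def .
qed

end
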